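(* Let $H$ be a graph. Then there is a full lc-sequence for $H$ if and only if each loopless connected component of $H$ consists of a single isolated vertex.
   Context: Graphs are finite, may have loops, but no multiple edges; an edge is either $\{u\}$ (a loop at $u$) or $\{u,w\}$ with $u\ne w$. A vertex is isolated if no edge (including a loop) is incident to it. A graph is loopless if no vertex is looped. For $v\in V(H)$, $N_H(v)=\{u\in V(H): u\neq v,\ \{u,v\}\in E(H)\}$. For a looped vertex $v$, the local complement $H*v$ is the graph on $V(H)$ such that for every $p\subseteq V(H)$ with $|p|\in\{1,2\}$: $p\in E(H*v)$ iff either ($p\notin E(H)$ and $p\subseteq N_H(v)$) or ($p\in E(H)$ and $p\not\subseteq N_H(v)$). $H*_c v$ (defined only when $v$ is looped) is obtained from $H*v$ by removing all edges incident to $v$, including its loop. For mutually distinct vertices $v_1,\dots,v_k$, the sequence $\varphi=*_c v_1 *_c v_2\cdots *_c v_k$ (applied left to right) is an lc-sequence for $H$ if each operation is applicable, i.e. $v_i$ is looped in $H*_c v_1\cdots *_c v_{i-1}$ for all $i$. It is full if the resulting graph $H\varphi$ consists only of isolated vertices. *)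

theory Defs
  imports Main
begin

definition graph :: "'a set \<Rightarrow> 'a set set \<Rightarrow> bool" where
  "graph V E \<longleftrightarrow> finite V \<and> (\<forall>e\<in>E. e \<subseteq> V \<and> (card e = 1 \<or> card e = 2))"

definition looped :: "'a set set \<Rightarrow> 'a \<Rightarrow> bool" where
  "looped E v \<longleftrightarrow> {v} \<in> E"

definition isolated :: "'a set set \<Rightarrow> 'a \<Rightarrow> bool" where
  "isolated E v \<longleftrightarrow> (\<forall>e\<in>E. v \<notin> e)"

definition nbhd :: "'a set \<Rightarrow> 'a set set \<Rightarrow> 'a \<Rightarrow> 'a set" where
  "nbhd V E v = {u\<in>V. u \<noteq> v \<and> {u, v} \<in> E}"

definition lc :: "'a set \<Rightarrow> 'a set set \<Rightarrow> 'a \<Rightarrow> 'a set set" where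
  "lc V E v = {p. p \<subseteq> V \<and> (card p = 1 \<or> card p = 2) \<and>
      ((p \<notin> E \<and> p \<subseteq> nbhd V E v) \<or> (p \<in> E \<and> \<not> p \<subseteq> nbhd V E v))}"

definition lcc :: "'a set \<Rightarrow> 'a set set \<Rightarrow> 'a \<Rightarrow> 'a set set" where
  "lcc V E v = {p \<in> lc V E v. v \<notin> p}"

fun lc_apply :: "'a set \<Rightarrow> 'a set set \<Rightarrow> 'a list \<Rightarrow> 'a set set" where
  "lc_apply V E [] = E"
| "lc_apply V E (v # vs) = lc_apply V (lcc V E v) vs"

fun lc_applicable :: "'a set \<Rightarrow> 'a set set \<Rightarrow> 'a list \<Rightarrow> bool" where
  "lc_applicable V E [] = True"
| "lc_applicable V E (v # vs) \<longleftrightarrow> looped E v \<and> lc_applicable V (lcc V E v) vs"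

definition lc_sequence :: "'a set \<Rightarrow> 'a set set \<Rightarrow> 'a list \<Rightarrow> bool" where
  "lc_sequence V E vs \<longleftrightarrow> distinct vs \<and> set vs \<subseteq> V \<and> lc_applicable V E vs"

definition full_lc_sequence :: "'a set \<Rightarrow> 'a set set \<Rightarrow> 'a list \<Rightarrow> bool" where
  "full_lc_sequence V E vs \<longleftrightarrow> lc_sequence V E vs \<and> (\<forall>v\<in>V. isolated (lc_apply V E vs) v)"

definition adj :: "'a set set \<Rightarrow> 'a \<Rightarrow> 'a \<Rightarrow> bool" where
  "adj E u w \<longleftrightarrow> u \<noteq> w \<and> {u, w} \<in> E"

definition component :: "'a set \<Rightarrow> 'a set set \<Rightarrow> 'a set \<Rightarrow> bool" where
  "component V E C \<longleftrightarrow> (\<exists>v\<in>V. C = {w\<in>V. (adj E)\<^sup>*\<^sup>* v w})"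

definition loopless_on :: "'a set set \<Rightarrow> 'a set \<Rightarrow> bool" where
  "loopless_on E C \<longleftrightarrow> (\<forall>v\<in>C. \<not> looped E v)"

end

theory Submission
  imports Defs
begin

lemma looped_pair: "looped E x \<longleftrightarrow> {x,x} \<in> E" by (simp add: looped_def)

lemma graph_edge: "graph V E \<Longrightarrow> p \<in> E \<Longrightarrow> \<exists>x\<in>V. \<exists>y\<in>V. p = {x,y}"
proof -
  assume g: "graph V E" and p: "p \<in> E"
  then have sub: "p \<subseteq> V" and c: "card p = 1 \<or> card p = 2" by (auto simp: graph_def)
  from c show ?thesis
  proof
    assume "card p = 1" then obtain x where "p = {x}" by (auto simp: card_Suc_eq)
    with sub show ?thesis by auto
  next
    assume "card p = 2" then obtain x y where "p = {x,y}" by (auto simp: card_Suc_eq numeral_2_eq_2)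
    with sub show ?thesis by auto
  qed
qed

lemma graph_pairV: "graph V E \<Longrightarrow> {x,y} \<in> E \<Longrightarrow> x \<in> V \<and> y \<in> V"
  by (auto simp: graph_def)

lemma isolated_iff: "graph V E \<Longrightarrow> isolated E w \<longleftrightarrow> (\<forall>y. {w,y} \<notin> E)"
proof
  assume "isolated E w" then show "\<forall>y. {w,y} \<notin> E" unfolding isolated_def by blast
next
  assume a: "graph V E" "\<forall>y. {w,y} \<notin> E"
  show "isolated E w" unfolding isolated_def
  proof
    fix e assume "e \<in> E"
    then obtain x y where e: "e = {x,y}" using graph_edge[OF a(1)] by blast
    show "w \<notin> e"
    proof
      assume "w \<in> e"
      then have "e = {w,y} \<or> e = {w,x}" using e by (auto simp: insert_commute)
      then show False using a(2) \<open>e \<in> E\<close> by blast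
    qed
  qed
qed

lemma card_pair: "card {x,y} = 1 \<or> card {x,y} = 2"
  by (cases "x = y") auto

lemma lcc_iff: "p \<in> lcc V E v \<longleftrightarrow> p \<subseteq> V \<and> (card p = 1 \<or> card p = 2) \<and> v \<notin> p \<and>
   (p \<in> E \<longleftrightarrow> \<not> p \<subseteq> nbhd V E v)"
  unfolding lcc_def lc_def by auto

lemma lcc_pair:
  assumes "looped E v" "x \<in> V" "y \<in> V"
  shows "{x,y} \<in> lcc V E v \<longleftrightarrow> x \<noteq> v \<and> y \<noteq> v \<and> (({x,y} \<in> E) \<noteq> ({x,v} \<in> E \<and> {y,v} \<in> E))"
proof -
  have n: "z \<in> nbhd V E v \<longleftrightarrow> z \<in> V \<and> z \<noteq> v \<and> {z,v} \<in> E" for z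
    unfolding nbhd_def by (auto simp: insert_commute)
  have s: "{x,y} \<subseteq> nbhd V E v \<longleftrightarrow> x \<in> nbhd V E v \<and> y \<in> nbhd V E v" by simp
  show ?thesis using assms card_pair[of x y] by (simp only: lcc_iff s n) auto
qed

lemma lcc_notV: "x \<notin> V \<Longrightarrow> {x,y} \<notin> lcc V E v"
  by (simp add: lcc_iff)

lemma graph_lcc: "graph V E \<Longrightarrow> graph V (lcc V E v)"
  unfolding graph_def by (auto simp: lcc_iff)

lemma isolated_lcc: "graph V E \<Longrightarrow> isolated E w \<Longrightarrow> isolated (lcc V E v) w"
proof -
  assume g: "graph V E" and i: "isolated E w"
  have "w \<notin> nbhd V E v" using i unfolding nbhd_def isolated_def by auto
  then show ?thesis using i unfolding isolated_def by (auto simp: lcc_iff)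
qed

lemma v_isolated_lcc: "isolated (lcc V E v) v"
  unfolding isolated_def by (auto simp: lcc_iff)


definition cls :: "'a set \<Rightarrow> 'a set set \<Rightarrow> 'a \<Rightarrow> 'a set" where
  "cls V E k = {w\<in>V. (adj E)\<^sup>*\<^sup>* k w}"

definition badc :: "'a set \<Rightarrow> 'a set set \<Rightarrow> 'a \<Rightarrow> bool" where
  "badc V E k \<longleftrightarrow> k \<in> V \<and> (\<exists>y. adj E k y) \<and> (\<forall>w\<in>cls V E k. \<not> looped E w)"

definition good :: "'a set \<Rightarrow> 'a set set \<Rightarrow> bool" where
  "good V E \<longleftrightarrow> (\<forall>C. component V E C \<and> loopless_on E C \<longrightarrow> (\<exists>v. C = {v} \<and> isolated E v))"

lemma adj_sym: "adj E x y \<Longrightarrow> adj E y x"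
  by (auto simp: adj_def insert_commute)

lemma adj_V: "graph V E \<Longrightarrow> adj E x y \<Longrightarrow> x \<in> V \<and> y \<in> V"
  by (auto simp: adj_def dest: graph_pairV)

lemma R_sym: "(adj E)\<^sup>*\<^sup>* x y \<Longrightarrow> (adj E)\<^sup>*\<^sup>* y x"
proof (induction rule: rtranclp_induct)
  case base then show ?case by simp
next
  case (step y z)
  then show ?case by (meson adj_sym converse_rtranclp_into_rtranclp)
qed

lemma R_V: assumes "graph V E" "k \<in> V" "(adj E)\<^sup>*\<^sup>* k w" shows "w \<in> V"
  using assms(3)
proof (induction rule: rtranclp_induct)
  case base then show ?case using assms(2) .
next
  case (step y z) then show ?case using adj_V[OF assms(1)] by blast
qed

lemma cls_closed: "graph V E \<Longrightarrow> x \<in> cls V E k \<Longrightarrow> adj E x y \<Longrightarrow> y \<in> cls V E k"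
  unfolding cls_def by (auto dest: adj_V)

lemma cls_same: "x \<in> cls V E k \<Longrightarrow> cls V E x = cls V E k"
  unfolding cls_def by (auto intro: rtranclp_trans R_sym)

lemma badc_mem: "badc V E k \<Longrightarrow> k \<in> cls V E k"
  unfolding badc_def cls_def by auto

lemma badc_nbr:
  assumes g: "graph V E" and b: "badc V E k" and x: "x \<in> cls V E k"
  shows "\<exists>y. adj E x y"
proof (cases "x = k")
  case True then show ?thesis using b by (auto simp: badc_def)
next
  case False
  from x have "(adj E)\<^sup>*\<^sup>* x k" unfolding cls_def by (auto intro: R_sym)
  then show ?thesis
  proof (cases rule: converse_rtranclpE)
    case base then show ?thesis using False by simp
  next
    case (step z) then show ?thesis by blast
  qed
qed

lemma badc_other:
  assumes g: "graph V E" and b: "badc V E k" and x: "x \<in> cls V E k"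
  shows "badc V E x \<and> cls V E x = cls V E k"
  using badc_nbr[OF g b x] cls_same[OF x] x b unfolding badc_def cls_def by auto

lemma good_iff:
  assumes g: "graph V E"
  shows "good V E \<longleftrightarrow> (\<forall>k. \<not> badc V E k)"
proof
  assume gd: "good V E"
  show "\<forall>k. \<not> badc V E k"
  proof (intro allI notI)
    fix k assume b: "badc V E k"
    then obtain y where y: "adj E k y" and kV: "k \<in> V" by (auto simp: badc_def)
    have comp: "component V E (cls V E k)" using kV unfolding component_def cls_def by auto
    have ll: "loopless_on E (cls V E k)" using b unfolding loopless_on_def badc_def by auto
    from gd comp ll obtain v where C: "cls V E k = {v}" unfolding good_def by blast
    have "k \<in> cls V E k" by (rule badc_mem[OF b])
    moreover have "y \<in> cls V E k" using cls_closed[OF g badc_mem[OF b] y] .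
    ultimately show False using C y by (auto simp: adj_def)
  qed
next
  assume nb: "\<forall>k. \<not> badc V E k"
  show "good V E" unfolding good_def
  proof (intro allI impI)
    fix C assume a: "component V E C \<and> loopless_on E C"
    then obtain k where kV: "k \<in> V" and C: "C = cls V E k" unfolding component_def cls_def by blast
    have kC: "k \<in> C" using C kV unfolding cls_def by auto
    have ll: "\<forall>w\<in>cls V E k. \<not> looped E w" using a C unfolding loopless_on_def by auto
    have noadj: "\<not> adj E k y" for y using nb[rule_format, of k] kV ll unfolding badc_def by auto
    have "C = {k}"
    proof
      show "C \<subseteq> {k}"
      proof
        fix w assume "w \<in> C"
        then have "(adj E)\<^sup>*\<^sup>* k w" using C unfolding cls_def by auto
        then show "w \<in> {k}" using noadj by (cases rule: converse_rtranclpE) auto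
      qed
    qed (use kC in auto)
    moreover have "isolated E k"
      unfolding isolated_iff[OF g]
    proof
      fix y show "{k,y} \<notin> E"
      proof (cases "y = k")
        case True then show ?thesis using ll kC C by (auto simp: looped_def)
      next
        case False then show ?thesis using noadj[of y] by (auto simp: adj_def)
      qed
    qed
    ultimately show "\<exists>v. C = {v} \<and> isolated E v" by blast
  qed
qed

lemma cls_transfer:
  assumes g1: "graph V E1" and kV: "k \<in> V"
    and ag: "\<forall>x\<in>cls V E1 k. \<forall>y. adj E1 x y \<longleftrightarrow> adj E2 x y"
  shows "cls V E1 k = cls V E2 k"
proof -
  have 1: "(adj E2)\<^sup>*\<^sup>* k w" if "(adj E1)\<^sup>*\<^sup>* k w" for w
    using that
  proof (induction rule: rtranclp_induct)
    case base then show ?case by simp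
  next
    case (step y z)
    have "y \<in> cls V E1 k" using step R_V[OF g1 kV] unfolding cls_def by auto
    then have "adj E2 y z" using ag step by blast
    then show ?case using step by (meson rtranclp.rtrancl_into_rtrancl)
  qed
  have 2: "(adj E1)\<^sup>*\<^sup>* k w" if "(adj E2)\<^sup>*\<^sup>* k w" for w
    using that
  proof (induction rule: rtranclp_induct)
    case base then show ?case by simp
  next
    case (step y z)
    have "y \<in> cls V E1 k" using step R_V[OF g1 kV] unfolding cls_def by auto
    then have "adj E1 y z" using ag step by blast
    then show ?case using step by (meson rtranclp.rtrancl_into_rtrancl)
  qed
  show ?thesis unfolding cls_def using 1 2 by blast
qed


lemma lcc_mem:
  assumes "looped E v"
  shows "{x,y} \<in> lcc V E v \<longleftrightarrow> x \<in> V \<and> y \<in> V \<and> x \<noteq> v \<and> y \<noteq> v \<and>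
           (({x,y} \<in> E) \<noteq> ({x,v} \<in> E \<and> {y,v} \<in> E))"
proof (cases "x \<in> V \<and> y \<in> V")
  case True then show ?thesis using lcc_pair[OF assms] by blast
next
  case False
  then have "{x,y} \<notin> lcc V E v" using lcc_notV[of x V y E v] lcc_notV[of y V x E v]
    by (auto simp: insert_commute)
  then show ?thesis using False by blast
qed

lemma lcc_adj:
  assumes "looped E v"
  shows "adj (lcc V E v) x y \<longleftrightarrow> x \<noteq> y \<and> x \<in> V \<and> y \<in> V \<and> x \<noteq> v \<and> y \<noteq> v \<and>
           (({x,y} \<in> E) \<noteq> ({x,v} \<in> E \<and> {y,v} \<in> E))"
  unfolding adj_def lcc_mem[OF assms] by blast

lemma lcc_looped:
  assumes "looped E v"
  shows "looped (lcc V E v) x \<longleftrightarrow> x \<in> V \<and> x \<noteq> v \<and> (({x,x} \<in> E) \<noteq> ({x,v} \<in> E))"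
  unfolding looped_pair lcc_mem[OF assms] by blast

lemma isolated_no_adj: "isolated E v \<Longrightarrow> \<not> adj E v y"
  unfolding isolated_def adj_def by blast

lemma looped_V: "graph V E \<Longrightarrow> looped E v \<Longrightarrow> v \<in> V"
  unfolding looped_def graph_def by auto

lemma bad_meets:
  assumes g: "graph V E" and gd: "\<forall>k. \<not> badc V E k" and lv: "looped E v"
    and b: "badc V (lcc V E v) k0"
  shows "\<exists>u\<in>cls V (lcc V E v) k0. {u,v} \<in> E \<and> u \<noteq> v"
proof (rule ccontr)
  let ?E = "lcc V E v"
  let ?K = "cls V ?E k0"
  have g': "graph V ?E" by (rule graph_lcc[OF g])
  assume "\<not> ?thesis"
  then have na: "\<forall>u\<in>?K. u \<noteq> v \<longrightarrow> {u,v} \<notin> E" by blast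
  have vK: "v \<notin> ?K"
  proof
    assume "v \<in> ?K"
    then obtain y where "adj ?E v y" using badc_nbr[OF g' b] by blast
    then show False using isolated_no_adj[OF v_isolated_lcc[of V E v]] by blast
  qed
  have na2: "\<forall>u\<in>?K. {u,v} \<notin> E" using na vK by metis
  have KV: "?K \<subseteq> V" unfolding cls_def by auto
  have ag: "\<forall>x\<in>?K. \<forall>y. adj ?E x y \<longleftrightarrow> adj E x y"
  proof (intro ballI allI)
    fix x y assume x: "x \<in> ?K"
    show "adj ?E x y \<longleftrightarrow> adj E x y"
      unfolding lcc_adj[OF lv]
      using na2 x vK KV graph_pairV[OF g, of x y] unfolding adj_def by auto
  qed
  have lp: "\<forall>x\<in>?K. looped ?E x \<longleftrightarrow> looped E x"
    unfolding lcc_looped[OF lv] using na2 vK KV by (auto simp: looped_pair)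
  have k0V: "k0 \<in> V" using b by (simp add: badc_def)
  have eq: "?K = cls V E k0" by (rule cls_transfer[OF g' k0V ag])
  have "badc V E k0"
    unfolding badc_def
  proof (intro conjI)
    show "k0 \<in> V" by (rule k0V)
    obtain y where "adj ?E k0 y" using b by (auto simp: badc_def)
    then show "\<exists>y. adj E k0 y" using ag badc_mem[OF b] by blast
    show "\<forall>w\<in>cls V E k0. \<not> looped E w" using b lp eq unfolding badc_def by auto
  qed
  then show False using gd by blast
qed


lemma isolated_notin_cls:
  assumes g: "graph V E" and b: "badc V E k" and i: "isolated E w"
  shows "w \<notin> cls V E k"
proof
  assume "w \<in> cls V E k"
  then obtain y where "adj E w y" using badc_nbr[OF g b] by blast
  then show False using isolated_no_adj[OF i] by blast
qed

lemma cls_V: "cls V E k \<subseteq> V" unfolding cls_def by auto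

lemma in_cls: "graph V E \<Longrightarrow> k \<in> V \<Longrightarrow> (adj E)\<^sup>*\<^sup>* k w \<Longrightarrow> w \<in> cls V E k"
  unfolding cls_def using R_V[of V E k w] by blast

lemma descent:
  assumes g: "graph V E" and gd: "\<forall>k. \<not> badc V E k" and lv: "looped E v"
    and b: "badc V (lcc V E v) k0"
  shows "\<exists>u. u \<in> cls V (lcc V E v) k0 \<and> looped E u \<and> (\<forall>k2. badc V (lcc V E u) k2 \<longrightarrow>
            cls V (lcc V E u) k2 \<subseteq> cls V (lcc V E v) k0 - {u})"
proof -
  define E1 where "E1 = lcc V E v"
  define K where "K = cls V E1 k0"
  have g1: "graph V E1" unfolding E1_def by (rule graph_lcc[OF g])
  have b1: "badc V E1 k0" using b unfolding E1_def .
  have vV: "v \<in> V" by (rule looped_V[OF g lv])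
  obtain u where uK: "u \<in> K" and au: "{u,v} \<in> E" and uv: "u \<noteq> v"
    using bad_meets[OF g gd lv b] unfolding K_def E1_def by blast
  have KV: "K \<subseteq> V" unfolding K_def by (rule cls_V)
  have vK: "v \<notin> K" unfolding K_def E1_def
    by (rule isolated_notin_cls[OF graph_lcc[OF g] b v_isolated_lcc])
  have vv: "{v,v} \<in> E" using lv by (simp add: looped_pair)
  have lp: "\<forall>x\<in>K. ({x,x} \<in> E \<longleftrightarrow> {x,v} \<in> E)"
  proof
    fix x assume x: "x \<in> K"
    then have "\<not> looped E1 x" using b1 unfolding K_def badc_def by blast
    then show "{x,x} \<in> E \<longleftrightarrow> {x,v} \<in> E"
      unfolding E1_def lcc_looped[OF lv] using x KV vK by blast
  qed
  have uu: "{u,u} \<in> E" using lp uK au by blast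
  have lu: "looped E u" using uu by (simp add: looped_pair)
  have uV: "u \<in> V" using uK KV by blast
  have star: "\<forall>x\<in>K. \<forall>y\<in>V. y \<notin> K \<longrightarrow> ({x,y} \<in> E \<longleftrightarrow> {x,v} \<in> E \<and> {y,v} \<in> E)"
  proof (intro ballI impI)
    fix x y assume x: "x \<in> K" and yV: "y \<in> V" and yK: "y \<notin> K"
    show "{x,y} \<in> E \<longleftrightarrow> {x,v} \<in> E \<and> {y,v} \<in> E"
    proof (cases "y = v")
      case True then show ?thesis using vv by simp
    next
      case False
      have "\<not> adj E1 x y" using cls_closed[OF g1, of x k0 y] x yK unfolding K_def by blast
      moreover have "x \<noteq> y" using x yK by blast
      ultimately show ?thesis unfolding E1_def lcc_adj[OF lv] using x KV yV vK False by blast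
    qed
  qed
  have bz: "\<forall>z\<in>V. z \<notin> K \<longrightarrow> ({z,u} \<in> E \<longleftrightarrow> {z,v} \<in> E)"
    using star uK au by (auto simp: insert_commute)
  have "\<forall>k2. badc V (lcc V E u) k2 \<longrightarrow> cls V (lcc V E u) k2 \<subseteq> K - {u}"
  proof (intro allI impI)
    fix k2
    define E2 where "E2 = lcc V E u"
    define K2 where "K2 = cls V E2 k2"
    assume "badc V (lcc V E u) k2"
    then have b2: "badc V E2 k2" unfolding E2_def .
    have g2: "graph V E2" unfolding E2_def by (rule graph_lcc[OF g])
    have uK2: "u \<notin> K2" unfolding K2_def E2_def
      by (rule isolated_notin_cls[OF graph_lcc[OF g] b2[unfolded E2_def] v_isolated_lcc])
    have K2V: "K2 \<subseteq> V" unfolding K2_def by (rule cls_V)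
    have k2V: "k2 \<in> V" using b2 by (simp add: badc_def)
    have k2K2: "k2 \<in> K2" unfolding K2_def by (rule badc_mem[OF b2])
    have F1: "\<forall>x\<in>K. x \<noteq> u \<longrightarrow> (\<forall>z\<in>V. z \<notin> K \<longrightarrow>
               ({x,z} \<in> E2 \<longleftrightarrow> {z,v} \<in> E \<and> ({x,v} \<in> E) \<noteq> ({x,u} \<in> E)))"
    proof (intro ballI impI)
      fix x z assume x: "x \<in> K" "x \<noteq> u" and z: "z \<in> V" "z \<notin> K"
      have "z \<noteq> u" using z uK by blast
      then show "{x,z} \<in> E2 \<longleftrightarrow> {z,v} \<in> E \<and> ({x,v} \<in> E) \<noteq> ({x,u} \<in> E)"
        unfolding E2_def lcc_mem[OF lu] using x z KV star bz by blast
    qed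
    have F2: "\<forall>x\<in>K. x \<noteq> u \<longrightarrow> (looped E2 x \<longleftrightarrow> ({x,v} \<in> E) \<noteq> ({x,u} \<in> E))"
      unfolding E2_def lcc_looped[OF lu] using lp KV by blast
    have L2: "\<forall>x\<in>K2. \<not> looped E2 x" using b2 unfolding badc_def K2_def by blast
    have noedge: "\<forall>x\<in>K2. x \<in> K \<longrightarrow> (\<forall>z\<in>V. z \<notin> K \<longrightarrow> {x,z} \<notin> E2)"
    proof (intro ballI impI)
      fix x z assume x: "x \<in> K2" "x \<in> K" and z: "z \<in> V" "z \<notin> K"
      have xu: "x \<noteq> u" using x uK2 by blast
      have "({x,v} \<in> E) = ({x,u} \<in> E)" using F2 L2 x xu by blast
      then show "{x,z} \<notin> E2" using F1 x xu z by blast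
    qed
    show "K2 \<subseteq> K - {u}"
    proof (cases "k2 \<in> K")
      case True
      have "w \<in> K" if "(adj E2)\<^sup>*\<^sup>* k2 w" for w
        using that
      proof (induction rule: rtranclp_induct)
        case base then show ?case using True .
      next
        case (step y z)
        have yK2: "y \<in> K2" unfolding K2_def by (rule in_cls[OF g2 k2V step(1)])
        have zV: "z \<in> V" using adj_V[OF g2 step(2)] by blast
        show ?case
        proof (rule ccontr)
          assume "z \<notin> K"
          then have "{y,z} \<notin> E2" using noedge yK2 step(3) zV by blast
          then show False using step(2) by (simp add: adj_def)
        qed
      qed
      then show ?thesis using uK2 unfolding K2_def cls_def by blast
    next
      case False
      have B1: "w \<notin> K" if "(adj E2)\<^sup>*\<^sup>* k2 w" for w
        using that
      proof (induction rule: rtranclp_induct)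
        case base then show ?case using False .
      next
        case (step y z)
        have yK2: "y \<in> K2" unfolding K2_def by (rule in_cls[OF g2 k2V step(1)])
        have zK2: "z \<in> K2" using cls_closed[OF g2 yK2[unfolded K2_def] step(2)] unfolding K2_def .
        have yV: "y \<in> V" using adj_V[OF g2 step(2)] by blast
        show ?case
        proof
          assume "z \<in> K"
          then have "{z,y} \<notin> E2" using noedge zK2 step(3) yV by blast
          then show False using step(2) by (simp add: adj_def insert_commute)
        qed
      qed
      have K2K: "\<forall>x\<in>K2. x \<notin> K" using B1 unfolding K2_def cls_def by blast
      have vy: "{v,y} \<notin> E2" if "y \<in> V" "y \<notin> K" for y
        unfolding E2_def lcc_mem[OF lu] using that bz au vK
        by (auto simp: insert_commute)
      have vK2: "v \<notin> K2"
      proof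
        assume vK2: "v \<in> K2"
        then obtain y where y: "adj E2 v y" using badc_nbr[OF g2 b2] unfolding K2_def by blast
        then have "y \<in> K2" using cls_closed[OF g2 vK2[unfolded K2_def]] unfolding K2_def by blast
        then have "y \<in> V" "y \<notin> K" using K2V K2K by auto
        then show False using vy y by (simp add: adj_def)
      qed
      have comp: "adj E2 x y \<longleftrightarrow> adj E1 x y" if "x \<in> V" "x \<notin> K" "x \<noteq> v" "y \<in> V" "y \<notin> K" "y \<noteq> v" for x y
      proof -
        have "x \<noteq> u" "y \<noteq> u" using that uK by auto
        then show ?thesis unfolding E1_def E2_def lcc_adj[OF lu] lcc_adj[OF lv]
          using that bz by blast
      qed
      have B3: "\<forall>x\<in>K2. \<forall>y. adj E2 x y \<longleftrightarrow> adj E1 x y"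
      proof (intro ballI allI)
        fix x y assume xK2: "x \<in> K2"
        have x: "x \<in> V" "x \<notin> K" "x \<noteq> v" using xK2 K2V K2K vK2 by auto
        show "adj E2 x y \<longleftrightarrow> adj E1 x y"
        proof (cases "y \<in> V \<and> y \<notin> K \<and> y \<noteq> v")
          case True then show ?thesis using comp x by blast
        next
          case False
          have n2: "\<not> adj E2 x y"
          proof
            assume a: "adj E2 x y"
            then have "y \<in> K2" using cls_closed[OF g2 xK2[unfolded K2_def]] unfolding K2_def by blast
            then show False using False K2V K2K vK2 by blast
          qed
          have n1: "\<not> adj E1 x y"
          proof
            assume a: "adj E1 x y"
            then have yV: "y \<in> V" using adj_V[OF g1] by blast
            have "y \<noteq> v"
            proof
              assume "y = v"
              then have "adj E1 v x" using adj_sym[OF a] by simp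
              then show False using isolated_no_adj[OF v_isolated_lcc[of V E v]] unfolding E1_def by blast
            qed
            then have "y \<in> K" using False yV by blast
            then have "x \<in> K" using cls_closed[OF g1, of y k0 x] adj_sym[OF a] unfolding K_def by blast
            then show False using x by blast
          qed
          show ?thesis using n1 n2 by blast
        qed
      qed
      have lp2: "\<forall>x\<in>K2. looped E2 x \<longleftrightarrow> looped E1 x"
      proof
        fix x assume xK2: "x \<in> K2"
        have x: "x \<in> V" "x \<notin> K" "x \<noteq> v" "x \<noteq> u" using xK2 K2V K2K vK2 uK by auto
        show "looped E2 x \<longleftrightarrow> looped E1 x"
          unfolding E1_def E2_def lcc_looped[OF lu] lcc_looped[OF lv] using x bz by blast
      qed
      have eqc: "K2 = cls V E1 k2" unfolding K2_def by (rule cls_transfer[OF g2 k2V B3[unfolded K2_def]])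
      have b1': "badc V E1 k2"
        unfolding badc_def
      proof (intro conjI)
        show "k2 \<in> V" by (rule k2V)
        obtain y where "adj E2 k2 y" using b2 by (auto simp: badc_def)
        then show "\<exists>y. adj E1 k2 y" using B3 k2K2 by blast
        show "\<forall>w\<in>cls V E1 k2. \<not> looped E1 w" using L2 lp2 eqc by blast
      qed
      obtain y where yK2: "y \<in> cls V E1 k2" and ay: "{y,v} \<in> E" and yv: "y \<noteq> v"
        using bad_meets[OF g gd lv b1'[unfolded E1_def]] unfolding E1_def by blast
      have y: "y \<in> K2" "y \<in> V" "y \<notin> K" using yK2 eqc K2V K2K by auto
      have same: "\<forall>x\<in>K. ({x,v} \<in> E) = ({x,u} \<in> E)"
      proof
        fix x assume xK: "x \<in> K"
        show "({x,v} \<in> E) = ({x,u} \<in> E)"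
        proof (cases "x = u")
          case True then show ?thesis using au uu by simp
        next
          case xu: False
          show ?thesis
          proof (rule ccontr)
            assume ne: "({x,v} \<in> E) \<noteq> ({x,u} \<in> E)"
            then have "{x,y} \<in> E2" using F1 xK xu y ay by blast
            moreover have "x \<noteq> y" using xK y by blast
            ultimately have "adj E2 y x" by (simp add: adj_def insert_commute)
            then have "x \<in> K2" using cls_closed[OF g2 y(1)[unfolded K2_def]] unfolding K2_def by blast
            then show False using K2K xK by blast
          qed
        qed
      qed
      obtain w where w: "adj E1 u w" using badc_nbr[OF g1 b1 uK[unfolded K_def]] by blast
      have wK: "w \<in> K" using cls_closed[OF g1 uK[unfolded K_def] w] unfolding K_def .
      have "({u,w} \<in> E) \<noteq> ({u,v} \<in> E \<and> {w,v} \<in> E)"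
        using w unfolding E1_def lcc_adj[OF lv] by blast
      then have "({w,u} \<in> E) \<noteq> ({w,v} \<in> E)" using au by (simp add: insert_commute)
      then show ?thesis using same wK by blast
    qed
  qed
  then show ?thesis using lu uK unfolding K_def E1_def by blast
qed


lemma good_pivot_aux:
  assumes g: "graph V E" and gd: "\<forall>k. \<not> badc V E k"
  shows "looped E v \<Longrightarrow> badc V (lcc V E v) k0 \<Longrightarrow> card (cls V (lcc V E v) k0) = n \<Longrightarrow>
         \<exists>u. looped E u \<and> (\<forall>k. \<not> badc V (lcc V E u) k)"
proof (induction n arbitrary: v k0 rule: less_induct)
  case (less n)
  obtain u where uK: "u \<in> cls V (lcc V E v) k0" and lu: "looped E u" and sub: "\<forall>k2. badc V (lcc V E u) k2 \<longrightarrow>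
            cls V (lcc V E u) k2 \<subseteq> cls V (lcc V E v) k0 - {u}"
    using descent[OF g gd less.prems(1,2)] by blast
  show ?case
  proof (cases "\<forall>k. \<not> badc V (lcc V E u) k")
    case True then show ?thesis using lu by blast
  next
    case False
    then obtain k2 where b2: "badc V (lcc V E u) k2" by blast
    have fin: "finite (cls V (lcc V E v) k0)" using g cls_V[of V "lcc V E v" k0]
      unfolding graph_def by (auto intro: finite_subset)
    have "card (cls V (lcc V E u) k2) < n"
    proof -
      have "card (cls V (lcc V E u) k2) \<le> card (cls V (lcc V E v) k0 - {u})"
        using sub b2 fin by (intro card_mono) auto
      also have "\<dots> < card (cls V (lcc V E v) k0)" by (rule card_Diff1_less[OF fin uK])
      finally show ?thesis using less.prems(3) by simp
    qed
    then show ?thesis using less.IH[OF _ lu b2 refl] by blast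
  qed
qed


lemma good_pivot:
  assumes g: "graph V E" and gd: "\<forall>k. \<not> badc V E k" and l0: "looped E v0"
  shows "\<exists>u. looped E u \<and> (\<forall>k. \<not> badc V (lcc V E u) k)"
proof (cases "\<forall>k. \<not> badc V (lcc V E v0) k")
  case True then show ?thesis using l0 by blast
next
  case False
  then obtain k0 where "badc V (lcc V E v0) k0" by blast
  then show ?thesis using good_pivot_aux[OF g gd l0 _ refl] by blast
qed

lemma appl_nonisolated:
  "graph V E \<Longrightarrow> lc_applicable V E vs \<Longrightarrow> w \<in> set vs \<Longrightarrow> \<not> isolated E w"
proof (induction vs arbitrary: E)
  case Nil then show ?case by simp
next
  case (Cons v vs)
  show ?case
  proof (cases "w = v")
    case True
    have "{v} \<in> E" using Cons.prems(2) by (simp add: looped_def)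
    then show ?thesis using True unfolding isolated_def by blast
  next
    case False
    then have "\<not> isolated (lcc V E v) w"
      using Cons.IH[OF graph_lcc[OF Cons.prems(1)]] Cons.prems by auto
    then show ?thesis using isolated_lcc[OF Cons.prems(1)] by blast
  qed
qed

lemma exist_seq_aux:
  "graph V E \<Longrightarrow> (\<forall>k. \<not> badc V E k) \<Longrightarrow> card {x\<in>V. \<not> isolated E x} = n \<Longrightarrow>
   \<exists>vs. lc_sequence V E vs \<and> (\<forall>x\<in>V. isolated (lc_apply V E vs) x)"
proof (induction n arbitrary: E rule: less_induct)
  case (less n)
  note g = less.prems(1) and gd = less.prems(2)
  have finV: "finite V" using g by (simp add: graph_def)
  show ?case
  proof (cases "\<forall>x\<in>V. isolated E x")
    case True
    then show ?thesis by (intro exI[of _ "[]"]) (simp add: lc_sequence_def)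
  next
    case False
    then obtain x where xV: "x \<in> V" and xi: "\<not> isolated E x" by blast
    then obtain y where xy: "{x,y} \<in> E" using isolated_iff[OF g] by blast
    have "\<exists>v0. looped E v0"
    proof (cases "y = x")
      case True then show ?thesis using xy by (auto simp: looped_pair)
    next
      case False
      then have "adj E x y" using xy by (simp add: adj_def)
      then have "\<not> (\<forall>w\<in>cls V E x. \<not> looped E w)" using gd xV unfolding badc_def by blast
      then show ?thesis by blast
    qed
    then obtain v0 where "looped E v0" by blast
    then obtain v where lv: "looped E v" and gd': "\<forall>k. \<not> badc V (lcc V E v) k"
      using good_pivot[OF g gd] by blast
    have vV: "v \<in> V" by (rule looped_V[OF g lv])
    have g': "graph V (lcc V E v)" by (rule graph_lcc[OF g])
    have vni: "\<not> isolated E v" using lv unfolding looped_def isolated_def by auto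
    have subs: "{x\<in>V. \<not> isolated (lcc V E v) x} \<subseteq> {x\<in>V. \<not> isolated E x} - {v}"
      using isolated_lcc[OF g] v_isolated_lcc[of V E v] by blast
    have "card {x\<in>V. \<not> isolated (lcc V E v) x} < n"
    proof -
      have "card {x\<in>V. \<not> isolated (lcc V E v) x} \<le> card ({x\<in>V. \<not> isolated E x} - {v})"
        using subs finV by (intro card_mono) auto
      also have "\<dots> < card {x\<in>V. \<not> isolated E x}"
        using vV vni finV by (intro card_Diff1_less) auto
      finally show ?thesis using less.prems(3) by simp
    qed
    then obtain vs where s: "lc_sequence V (lcc V E v) vs"
      and f: "\<forall>x\<in>V. isolated (lc_apply V (lcc V E v) vs) x"
      using less.IH[OF _ g' gd' refl] by blast
    have "v \<notin> set vs"
      using appl_nonisolated[OF g', of vs v] s v_isolated_lcc[of V E v]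
      unfolding lc_sequence_def by blast
    then have "lc_sequence V E (v # vs)" using s lv vV unfolding lc_sequence_def by simp
    moreover have "\<forall>x\<in>V. isolated (lc_apply V E (v # vs)) x" using f by simp
    ultimately show ?thesis by blast
  qed
qed

lemma invariant:
  assumes g0: "graph V E0" and b: "badc V E0 k0"
  shows "graph V E1 \<Longrightarrow> (\<forall>p. p \<inter> cls V E0 k0 \<noteq> {} \<longrightarrow> (p \<in> E1 \<longleftrightarrow> p \<in> E0)) \<Longrightarrow>
    lc_applicable V E1 vs \<Longrightarrow>
    (\<forall>p. p \<inter> cls V E0 k0 \<noteq> {} \<longrightarrow> (p \<in> lc_apply V E1 vs \<longleftrightarrow> p \<in> E0))"
proof (induction vs arbitrary: E1)
  case Nil then show ?case by simp
next
  case (Cons v vs)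
  let ?K = "cls V E0 k0"
  note g1 = Cons.prems(1) and ag = Cons.prems(2)
  have lv: "looped E1 v" using Cons.prems(3) by simp
  have vK: "v \<notin> ?K"
  proof
    assume "v \<in> ?K"
    then have "{v} \<in> E0" using ag lv unfolding looped_def by blast
    then show False using b \<open>v \<in> ?K\<close> unfolding badc_def looped_def by blast
  qed
  have clo: "y \<in> ?K" if "x \<in> ?K" "{x,y} \<in> E0" for x y
  proof (cases "x = y")
    case True then show ?thesis using that by simp
  next
    case False then have "adj E0 x y" using that by (simp add: adj_def)
    then show ?thesis using cls_closed[OF g0 that(1)] by blast
  qed
  have ag2: "\<forall>p. p \<inter> ?K \<noteq> {} \<longrightarrow> (p \<in> lcc V E1 v \<longleftrightarrow> p \<in> E1)"
  proof (intro allI impI)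
    fix p assume "p \<inter> ?K \<noteq> {}"
    then obtain x where xp: "x \<in> p" and xK: "x \<in> ?K" by blast
    have "x \<notin> nbhd V E1 v"
    proof
      assume "x \<in> nbhd V E1 v"
      then have "{x,v} \<in> E1" by (simp add: nbhd_def)
      moreover have "{x,v} \<inter> ?K \<noteq> {}" using xK by blast
      ultimately have "{x,v} \<in> E0" using ag[rule_format, of "{x,v}"] by blast
      then show False using clo[OF xK, of v] vK by blast
    qed
    then have nsub: "\<not> p \<subseteq> nbhd V E1 v" using xp by blast
    show "p \<in> lcc V E1 v \<longleftrightarrow> p \<in> E1"
    proof
      assume "p \<in> lcc V E1 v" then show "p \<in> E1" using nsub by (simp add: lcc_iff)
    next
      assume pE: "p \<in> E1"
      have "v \<notin> p"
      proof
        assume vp: "v \<in> p"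
        obtain a c where pac: "p = {a,c}" using graph_edge[OF g1 pE] by blast
        have xv: "x \<noteq> v" using vK xK by blast
        have "p = {x,v}" using pac xp vp xv by blast
        moreover have "{x,v} \<inter> ?K \<noteq> {}" using xK by blast
        ultimately have "{x,v} \<in> E0" using ag[rule_format, of "{x,v}"] pE by blast
        then show False using clo[OF xK, of v] vK by blast
      qed
      then show "p \<in> lcc V E1 v" using pE g1 nsub unfolding graph_def by (simp add: lcc_iff)
    qed
  qed
  have ag3: "\<forall>p. p \<inter> ?K \<noteq> {} \<longrightarrow> (p \<in> lcc V E1 v \<longleftrightarrow> p \<in> E0)" using ag ag2 by blast
  have ap: "lc_applicable V (lcc V E1 v) vs" using Cons.prems(3) by simp
  have "\<forall>p. p \<inter> ?K \<noteq> {} \<longrightarrow> (p \<in> lc_apply V (lcc V E1 v) vs \<longleftrightarrow> p \<in> E0)"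
    by (rule Cons.IH[OF graph_lcc[OF g1] ag3 ap])
  then show ?case by simp
qed

theorem mainTheorem6:
  assumes "graph V E"
  shows "(\<exists>vs. full_lc_sequence V E vs) \<longleftrightarrow>
         (\<forall>C. component V E C \<and> loopless_on E C \<longrightarrow> (\<exists>v. C = {v} \<and> isolated E v))"
proof -
  have g: "graph V E" by (rule assms)
  have "(\<exists>vs. full_lc_sequence V E vs) \<longleftrightarrow> (\<forall>k. \<not> badc V E k)"
  proof
    assume "\<exists>vs. full_lc_sequence V E vs"
    then obtain vs where s: "lc_sequence V E vs" and f: "\<forall>v\<in>V. isolated (lc_apply V E vs) v"
      unfolding full_lc_sequence_def by blast
    show "\<forall>k. \<not> badc V E k"
    proof (intro allI notI)
      fix k assume b: "badc V E k"
      obtain y where "adj E k y" using b by (auto simp: badc_def)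
      then have ky: "{k,y} \<in> E" by (simp add: adj_def)
      have kK: "k \<in> cls V E k" by (rule badc_mem[OF b])
      have ap: "lc_applicable V E vs" using s unfolding lc_sequence_def by blast
      have inv: "\<forall>p. p \<inter> cls V E k \<noteq> {} \<longrightarrow> (p \<in> lc_apply V E vs \<longleftrightarrow> p \<in> E)"
        by (rule invariant[OF g b g _ ap]) blast
      have "{k,y} \<inter> cls V E k \<noteq> {}" using kK by blast
      then have "{k,y} \<in> lc_apply V E vs" using inv[rule_format, of "{k,y}"] ky by blast
      moreover have "k \<in> V" using b by (simp add: badc_def)
      ultimately show False using f unfolding isolated_def by blast
    qed
  next
    assume "\<forall>k. \<not> badc V E k"
    then show "\<exists>vs. full_lc_sequence V E vs"
      using exist_seq_aux[OF g _ refl] unfolding full_lc_sequence_def by blast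
  qed
  also have "\<dots> \<longleftrightarrow> good V E" using good_iff[OF g] by simp
  finally show ?thesis unfolding good_def .
qed

end
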